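(* Let $\mathbf A\in\mathbb R^{m\times n}$ and let $\mathbf x^0\in\mathbb R^n$ be $k$-sparse. If the RIP constant of $\mathbf A$ satisfies $\delta_{2k}\le 0.4404$ and $\alpha\ge 10\|\mathbf x^0\|_\infty$ (with $\alpha>0$), then $\mathbf x^0$ is the unique minimizer of problem (P2) with $\mathbf b:=\mathbf A\mathbf x^0$.
   Context: Problem (P2) is $\min_{\mathbf x}\{\|\mathbf x\|_1+\frac{1}{2\alpha}\|\mathbf x\|_2^2:\ \mathbf A\mathbf x=\mathbf b\}$. A vector is $k$-sparse if it has at most $k$ nonzero entries. The RIP constant $\delta_k$ of $\mathbf A$ is the smallest value such that $(1-\delta_k)\|\mathbf x\|_2^2\le\|\mathbf A\mathbf x\|_2^2\le(1+\delta_k)\|\mathbf x\|_2^2$ for all $k$-sparse $\mathbf x\in\mathbb R^n$. *)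

theory Defs
  imports "HOL-Analysis.Analysis"
begin

definition sparse :: "nat \<Rightarrow> real ^ 'n \<Rightarrow> bool" where
  "sparse k x \<longleftrightarrow> card {i. x $ i \<noteq> 0} \<le> k"

definition l1norm :: "real ^ 'n \<Rightarrow> real" where
  "l1norm x = (\<Sum>i\<in>UNIV. \<bar>x $ i\<bar>)"

definition linfnorm :: "real ^ 'n \<Rightarrow> real" where
  "linfnorm x = Max (range (\<lambda>i. \<bar>x $ i\<bar>))"

definition rip_const :: "real ^ 'n ^ 'm \<Rightarrow> nat \<Rightarrow> real" where
  "rip_const A s = Inf {d. 0 \<le> d \<and> (\<forall>x. sparse s x \<longrightarrow>
      (1 - d) * (norm x)\<^sup>2 \<le> (norm (A *v x))\<^sup>2 \<and> (norm (A *v x))\<^sup>2 \<le> (1 + d) * (norm x)\<^sup>2)}"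

definition P2_obj :: "real \<Rightarrow> real ^ 'n \<Rightarrow> real" where
  "P2_obj \<alpha> x = l1norm x + (1 / (2 * \<alpha>)) * (norm x)\<^sup>2"

definition P2_unique_minimizer :: "real ^ 'n ^ 'm \<Rightarrow> real ^ 'm \<Rightarrow> real \<Rightarrow> real ^ 'n \<Rightarrow> bool" where
  "P2_unique_minimizer A b \<alpha> x0 \<longleftrightarrow> A *v x0 = b \<and>
     (\<forall>x. A *v x = b \<and> x \<noteq> x0 \<longrightarrow> P2_obj \<alpha> x0 < P2_obj \<alpha> x)"

end

theory Submission
  imports Defs
begin


lemma discr:
  fixes P q K :: real
  assumes K: "K \<ge> 0" and all: "\<And>l. 0 \<le> P + 2*l*q + l^2*K"
  shows "q^2 \<le> K*P"
proof (cases "K > 0")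
  case True
  have "0 \<le> P + 2*(-q/K)*q + (-q/K)^2*K" by (rule all)
  also have "\<dots> = P - q^2/K" using True by (simp add: field_simps power2_eq_square)
  finally show ?thesis using True by (simp add: field_simps)
next
  case False
  hence K0: "K = 0" using K by simp
  have P0: "0 \<le> P" using all[of 0] by simp
  show ?thesis
  proof (cases "q = 0")
    case True thus ?thesis using K0 by simp
  next
    case False
    have "0 \<le> P + 2*(-(\<bar>P\<bar>+1)/(2*q))*q + (-(\<bar>P\<bar>+1)/(2*q))^2*K" by (rule all)
    also have "\<dots> = P - (\<bar>P\<bar>+1)" using False K0 by (simp add: field_simps)
    finally show ?thesis by simp
  qed
qed

lemma topk:
  fixes a :: "nat \<Rightarrow> real"
  assumes mono: "\<And>i j. i \<le> j \<Longrightarrow> a j \<le> a i" and nn: "\<And>i. 0 \<le> a i"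
    and fin: "finite P" and c: "card P \<le> k"
  shows "sum a P \<le> sum a {..<k}"
proof -
  let ?Q = "P \<inter> {..<k}" and ?P' = "P - {..<k}" and ?Q' = "{..<k} - P"
  have e1: "P = ?Q \<union> ?P'" by blast
  have e2: "{..<k} = ?Q \<union> ?Q'" by blast
  have cP': "card ?P' \<le> card ?Q'"
  proof -
    have "card P = card ?Q + card ?P'"
      using fin by (subst e1, subst card_Un_disjoint) auto
    moreover have "card {..<k} = card ?Q + card ?Q'"
      by (subst e2, subst card_Un_disjoint) auto
    ultimately show ?thesis using c by simp
  qed
  have "sum a ?P' \<le> of_nat (card ?P') * a k"
    by (rule sum_bounded_above) (auto intro: mono)
  also have "\<dots> \<le> of_nat (card ?Q') * a k"
    using cP' nn[of k] by (simp add: mult_right_mono)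
  also have "\<dots> \<le> sum a ?Q'"
    by (rule sum_bounded_below) (auto intro: mono)
  finally have "sum a ?P' \<le> sum a ?Q'" .
  moreover have "sum a P = sum a ?Q + sum a ?P'"
    using fin by (subst e1, subst sum.union_disjoint) auto
  moreover have "sum a {..<k} = sum a ?Q + sum a ?Q'"
    by (subst e2, subst sum.union_disjoint) auto
  ultimately show ?thesis by simp
qed

lemma sortexists:
  fixes h :: "real ^ 'n"
  shows "\<exists>\<sigma>. bij_betw \<sigma> {..<CARD('n)} (UNIV::'n set) \<and>
     (\<forall>p q. p \<le> q \<longrightarrow> q < CARD('n) \<longrightarrow> \<bar>h $ \<sigma> q\<bar> \<le> \<bar>h $ \<sigma> p\<bar>)"
proof -
  obtain xs0 :: "'n list" where xs0: "set xs0 = UNIV" "distinct xs0"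
    using finite_distinct_list[of "UNIV::'n set"] by auto
  define xs where "xs = sort_key (\<lambda>i. - \<bar>h $ i\<bar>) xs0"
  have s: "set xs = UNIV" and d: "distinct xs" using xs0 by (auto simp: xs_def)
  have len: "length xs = CARD('n)" using s d by (metis distinct_card)
  have so: "sorted (map (\<lambda>i. - \<bar>h $ i\<bar>) xs)" unfolding xs_def by simp
  have b: "bij_betw (\<lambda>p. xs ! p) {..<CARD('n)} UNIV"
    using s d len by (metis bij_betw_nth lessThan_atLeast0 atLeast0LessThan)
  have m: "\<forall>p q. p \<le> q \<longrightarrow> q < CARD('n) \<longrightarrow> \<bar>h $ (xs!q)\<bar> \<le> \<bar>h $ (xs!p)\<bar>"
    using so len by (auto simp: sorted_iff_nth_mono)
  show ?thesis using b m by blast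
qed



lemma rip_attained:
  fixes A :: "real ^ 'n ^ 'm"
  shows "0 \<le> rip_const A s \<and> (\<forall>x. sparse s x \<longrightarrow>
      (1 - rip_const A s) * (norm x)\<^sup>2 \<le> (norm (A *v x))\<^sup>2 \<and> (norm (A *v x))\<^sup>2 \<le> (1 + rip_const A s) * (norm x)\<^sup>2)"
proof -
  define D where "D = {d. 0 \<le> d \<and> (\<forall>x. sparse s x \<longrightarrow>
      (1 - d) * (norm x)\<^sup>2 \<le> (norm (A *v x))\<^sup>2 \<and> (norm (A *v x))\<^sup>2 \<le> (1 + d) * (norm x)\<^sup>2)}"
  have bl: "bounded_linear (\<lambda>x. A *v x)" by (simp add: matrix_vector_mul_bounded_linear)
  obtain K where K: "\<And>x. norm (A *v x) \<le> norm x * K" "K > 0"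
    using bounded_linear.pos_bounded[OF bl] by blast
  have "1 + K^2 \<in> D"
  proof -
    { fix x :: "real ^ 'n"
      have "(norm (A *v x))\<^sup>2 \<le> (norm x * K)^2" using K(1)[of x] by (simp add: power_mono)
      also have "\<dots> \<le> (1 + (1 + K^2)) * (norm x)\<^sup>2" by (simp add: power_mult_distrib algebra_simps)
      finally have "(norm (A *v x))\<^sup>2 \<le> (1 + (1 + K^2)) * (norm x)\<^sup>2" .
      moreover have "(1 - (1 + K^2)) * (norm x)\<^sup>2 \<le> (norm (A *v x))\<^sup>2"
      proof -
        have "(1 - (1 + K^2)) * (norm x)\<^sup>2 = - (K^2 * (norm x)\<^sup>2)" by simp
        also have "\<dots> \<le> 0" by simp
        also have "0 \<le> (norm (A *v x))\<^sup>2" by simp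
        finally show ?thesis .
      qed
      ultimately have "(1 - (1 + K^2)) * (norm x)\<^sup>2 \<le> (norm (A *v x))\<^sup>2 \<and> (norm (A *v x))\<^sup>2 \<le> (1 + (1 + K^2)) * (norm x)\<^sup>2" by blast }
    thus ?thesis unfolding D_def by (simp add: add_nonneg_nonneg)
  qed
  hence ne: "D \<noteq> {}" by blast
  have bb: "bdd_below D" unfolding D_def bdd_below_def by auto
  have cl: "closed D"
  proof -
    have "D = {d. 0 \<le> d} \<inter> (\<Inter>x\<in>{x. sparse s x}. {d. (1 - d) * (norm x)\<^sup>2 \<le> (norm (A *v x))\<^sup>2} \<inter> {d. (norm (A *v x))\<^sup>2 \<le> (1 + d) * (norm x)\<^sup>2})"
      unfolding D_def by auto
    also have "closed \<dots>"
      by (intro closed_Int closed_INT ballI closed_Collect_le continuous_intros)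
    finally show ?thesis .
  qed
  have "Inf D \<in> D" by (rule closed_contains_Inf[OF ne bb cl])
  moreover have "rip_const A s = Inf D" unfolding rip_const_def D_def by simp
  ultimately show ?thesis unfolding D_def by simp
qed



lemma sparse_sub:
  fixes x :: "real ^ 'n" and pos :: "'n \<Rightarrow> nat"
  assumes "inj pos" "{i. x $ i \<noteq> 0} \<subseteq> {i. pos i \<in> C}" "finite C" "card C \<le> m"
  shows "sparse m x"
proof -
  have "card {i. x $ i \<noteq> 0} \<le> card {i. pos i \<in> C}" by (rule card_mono) (use assms in auto)
  also have "\<dots> \<le> card C"
    by (rule card_inj_on_le[of pos]) (use assms in \<open>auto simp: inj_on_def inj_def\<close>)
  finally show ?thesis using assms(4) unfolding sparse_def by simp
qed

lemma blk_iff: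
  fixes p j k :: nat
  assumes "k > 0"
  shows "(p \<in> {j*k..<j*k+k}) \<longleftrightarrow> j = p div k"
proof
  assume "p \<in> {j*k..<j*k+k}"
  thus "j = p div k" using assms
    by (metis add.commute atLeastLessThan_iff div_nat_eqI mult.commute mult_Suc_right)
next
  assume "j = p div k"
  thus "p \<in> {j*k..<j*k+k}" using assms
    by (simp add: add.commute dividend_less_times_div mult.commute)
qed



lemma fin_lin:
  fixes s T x r :: real
  assumes "11 * x \<le> 10 * r" "T = x + r" "s \<le> x" shows "11 * s \<le> 10 * (T - s)"
  using assms by simp

lemma nsp:
  fixes A :: "real ^ 'n ^ 'm" and h :: "real ^ 'n" and \<delta> :: real
  assumes rip: "\<forall>x. sparse (2*k) x \<longrightarrow> (1 - \<delta>) * (norm x)\<^sup>2 \<le> (norm (A *v x))\<^sup>2 \<and> (norm (A *v x))\<^sup>2 \<le> (1 + \<delta>) * (norm x)\<^sup>2"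
    and d0: "0 \<le> \<delta>" and d1: "\<delta> \<le> 0.4404" and Ah: "A *v h = 0" and cS: "card S \<le> k"
  shows "11 * (\<Sum>i\<in>S. \<bar>h $ i\<bar>) \<le> 10 * ((\<Sum>i\<in>UNIV. \<bar>h $ i\<bar>) - (\<Sum>i\<in>S. \<bar>h $ i\<bar>))"
proof (cases "k = 0")
  case True
  hence "S = {}" using cS by (simp add: card_eq_0_iff)
  thus ?thesis by (simp add: sum_nonneg)
next
  case False
  hence kpos: "k > 0" by simp
  define N where "N = CARD('n)"
  obtain \<sigma> where bij: "bij_betw \<sigma> {..<N} (UNIV::'n set)"
      and smono: "\<And>p q. p \<le> q \<Longrightarrow> q < N \<Longrightarrow> \<bar>h $ \<sigma> q\<bar> \<le> \<bar>h $ \<sigma> p\<bar>"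
    using sortexists[of h] unfolding N_def by blast
  define pos where "pos = inv_into {..<N} \<sigma>"
  have pos_lt: "\<And>i. pos i < N" unfolding pos_def using bij
    by (metis UNIV_I bij_betw_def inv_into_into lessThan_iff)
  have spos: "\<And>i. \<sigma> (pos i) = i" unfolding pos_def using bij
    by (metis UNIV_I bij_betw_inv_into_right)
  have injpos: "inj pos" by (metis injI spos)
  have possig: "\<And>p. p < N \<Longrightarrow> pos (\<sigma> p) = p" unfolding pos_def using bij
    by (simp add: bij_betw_def)
  define a where "a p = (if p < N then \<bar>h $ \<sigma> p\<bar> else 0)" for p
  have a_nn: "\<And>p. 0 \<le> a p" unfolding a_def by simp
  have a_mono: "\<And>p q. p \<le> q \<Longrightarrow> a q \<le> a p" unfolding a_def using smono by auto
  have a_pos: "\<And>i. a (pos i) = \<bar>h $ i\<bar>" unfolding a_def using pos_lt spos by simp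
  have conv: "\<And>F. (\<Sum>i\<in>UNIV. F i) = (\<Sum>p<N. F (\<sigma> p))"
    using sum.reindex_bij_betw[OF bij] by metis
  define B where "B j = {j*k..<j*k+k}" for j
  have finB: "\<And>j. finite (B j)" unfolding B_def by simp
  have cardB: "\<And>j. card (B j) = k" unfolding B_def by simp
  have convB: "(\<Sum>i\<in>UNIV. if pos i \<in> C then g \<bar>h $ i\<bar> else 0) = (\<Sum>p\<in>C. g (a p))"
    if g0: "g 0 = 0" and fC: "finite C" for g :: "real \<Rightarrow> real" and C
  proof -
    have "(\<Sum>i\<in>UNIV. if pos i \<in> C then g \<bar>h $ i\<bar> else 0) = (\<Sum>p<N. if p \<in> C then g (a p) else 0)"
      by (subst conv) (rule sum.cong, auto simp: a_def possig)
    also have "\<dots> = (\<Sum>p\<in>{..<N} \<inter> C. g (a p))" by (simp add: sum.inter_restrict)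
    also have "\<dots> = (\<Sum>p\<in>C. g (a p))"
      by (rule sum.mono_neutral_left) (use fC g0 in \<open>auto simp: a_def\<close>)
    finally show ?thesis .
  qed
  define z where "z j = (\<chi> i. if pos i \<in> B j then h $ i else 0)" for j
  define X where "X j = sum a (B j)" for j
  have X_nn: "\<And>j. 0 \<le> X j" unfolding X_def by (simp add: sum_nonneg a_nn)
  have znorm: "(norm (z j))\<^sup>2 = (\<Sum>p\<in>B j. (a p)\<^sup>2)" for j
  proof -
    have "(norm (z j))\<^sup>2 = (\<Sum>i\<in>UNIV. if pos i \<in> B j then \<bar>h $ i\<bar>^2 else 0)"
      unfolding power2_norm_eq_inner inner_vec_def z_def
      by (rule sum.cong) (auto simp: power2_eq_square)
    also have "\<dots> = (\<Sum>p\<in>B j. (a p)\<^sup>2)" by (rule convB) (auto simp: finB)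
    finally show ?thesis .
  qed
  have zsp: "sparse (2*k) (z j)" for j
    by (rule sparse_sub[OF injpos, of _ "B j"]) (auto simp: z_def finB cardB)
  have zsp2: "sparse (2*k) (z 0 + l *\<^sub>R z j)" for j l
  proof (rule sparse_sub[OF injpos, of _ "B 0 \<union> B j"])
    show "card (B 0 \<union> B j) \<le> 2 * k" using card_Un_le[of "B 0" "B j"] cardB by simp
  qed (auto simp: z_def finB)
  have zorth: "inner (z 0) (z (Suc j)) = 0" for j
    unfolding inner_vec_def z_def B_def
    by (rule sum.neutral) auto
  have zdec: "h = z 0 + (\<Sum>j<N. z (Suc j))"
  proof -
    have "h $ i = (\<Sum>j<Suc N. z j $ i)" for i
    proof -
      have "(\<Sum>j<Suc N. z j $ i) = (\<Sum>j<Suc N. if j = pos i div k then h $ i else 0)"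
        unfolding z_def B_def using blk_iff[OF kpos] by simp
      also have "\<dots> = h $ i"
      proof -
        have "pos i div k \<le> pos i" by simp
        hence "pos i div k < Suc N" using pos_lt[of i] by linarith
        thus ?thesis by simp
      qed
      finally show ?thesis by simp
    qed
    hence "h = (\<Sum>j<Suc N. z j)" by (simp add: vec_eq_iff sum_component)
    thus ?thesis by (simp only: sum.lessThan_Suc_shift)
  qed
  define U where "U = A *v z 0"
  define Z where "Z j = A *v z (Suc j)" for j
  define b where "b j = norm (z (Suc j))" for j
  define b0 where "b0 = norm (z 0)"
  define P where "P = (norm U)\<^sup>2 - (1 - \<delta>) * b0\<^sup>2"
  have P_nn: "0 \<le> P" using rip zsp[of 0] unfolding P_def U_def b0_def by auto
  have Udec: "U = - (\<Sum>j<N. Z j)"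
  proof -
    have "0 = A *v h" using Ah by simp
    also have "\<dots> = U + (\<Sum>j<N. Z j)" unfolding U_def Z_def
      by (subst zdec) (simp add: matrix_vector_right_distrib vec.sum)
    finally show ?thesis by (simp add: eq_neg_iff_add_eq_0 add.commute)
  qed
  have qb: "\<bar>inner U (Z j)\<bar> \<le> sqrt (2*\<delta>*P) * b j" for j
  proof -
    let ?q = "inner U (Z j)"
    have Zup: "(norm (Z j))\<^sup>2 \<le> (1 + \<delta>) * (b j)\<^sup>2" using rip zsp[of "Suc j"] unfolding Z_def b_def by auto
    have "0 \<le> P + 2*l*?q + l^2*(2*\<delta>*(b j)\<^sup>2)" for l
    proof -
      have "(1 - \<delta>) * (norm (z 0 + l *\<^sub>R z (Suc j)))\<^sup>2 \<le> (norm (A *v (z 0 + l *\<^sub>R z (Suc j))))\<^sup>2"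
        using rip zsp2[of l "Suc j"] by auto
      moreover have "(norm (z 0 + l *\<^sub>R z (Suc j)))\<^sup>2 = b0\<^sup>2 + l^2 * (b j)\<^sup>2"
        unfolding b0_def b_def power2_norm_eq_inner using zorth[of j]
        by (simp add: inner_add_left inner_add_right inner_commute power2_eq_square)
      moreover have "(norm (A *v (z 0 + l *\<^sub>R z (Suc j))))\<^sup>2 = (norm U)\<^sup>2 + 2*l*?q + l^2 * (norm (Z j))\<^sup>2"
        unfolding U_def Z_def power2_norm_eq_inner
        by (simp add: matrix_vector_right_distrib matrix_vector_mult_scaleR inner_add_left inner_add_right inner_commute power2_eq_square algebra_simps)
      moreover have "l^2 * (norm (Z j))\<^sup>2 \<le> l^2 * ((1 + \<delta>) * (b j)\<^sup>2)"
        using Zup by (simp add: mult_left_mono)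
      ultimately show ?thesis unfolding P_def by (simp add: algebra_simps)
    qed
    hence "?q^2 \<le> (2*\<delta>*(b j)\<^sup>2) * P" by (intro discr) (auto simp: d0)
    also have "\<dots> = (sqrt (2*\<delta>*P) * b j)^2" using d0 P_nn by (simp add: power_mult_distrib)
    finally have "?q^2 \<le> (sqrt (2*\<delta>*P) * b j)^2" .
    moreover have "0 \<le> sqrt (2*\<delta>*P) * b j" unfolding b_def using d0 P_nn by simp
    ultimately show ?thesis using abs_le_square_iff by (metis abs_of_nonneg)
  qed
  define M where "M = (\<Sum>j<N. b j)"
  have "(norm U)\<^sup>2 = - (\<Sum>j<N. inner U (Z j))"
    unfolding power2_norm_eq_inner by (subst (2) Udec) (simp add: inner_sum_right)
  also have "\<dots> \<le> (\<Sum>j<N. \<bar>inner U (Z j)\<bar>)"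
    by (simp add: sum_negf[symmetric] sum_mono)
  also have "\<dots> \<le> (\<Sum>j<N. sqrt (2*\<delta>*P) * b j)" by (rule sum_mono) (rule qb)
  also have "\<dots> = sqrt (2*\<delta>*P) * M" unfolding M_def by (simp add: sum_distrib_left)
  finally have UM: "(norm U)\<^sup>2 \<le> sqrt (2*\<delta>*P) * M" .
  have key1: "(1 - \<delta>) * b0\<^sup>2 \<le> \<delta> * M^2 / 2"
  proof (cases "\<delta> = 0")
    case True
    thus ?thesis using UM P_nn unfolding P_def by simp
  next
    case False
    hence dp: "\<delta> > 0" using d0 by simp
    let ?r = "sqrt (2*\<delta>*P)"
    have r2: "?r^2 = 2*\<delta>*P" using d0 P_nn by simp
    have "0 \<le> (?r - \<delta>*M)^2" by simp
    hence "2*\<delta>*(?r*M) \<le> 2*\<delta>*(P + \<delta>*M^2/2)" using r2 by (simp add: power2_eq_square algebra_simps)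
    hence "?r*M \<le> P + \<delta>*M^2/2" using dp by simp
    thus ?thesis using UM unfolding P_def by simp
  qed
  have blk: "(b j)\<^sup>2 \<le> X (Suc j) * X j / real k" for j
  proof -
    have ap: "a p \<le> X j / real k" if p: "p \<in> B (Suc j)" for p
    proof -
      have "of_nat (card (B j)) * a p \<le> sum a (B j)"
        by (rule sum_bounded_below) (use p in \<open>auto simp: B_def intro!: a_mono\<close>)
      thus ?thesis using cardB[of j] kpos unfolding X_def by (simp add: field_simps)
    qed
    have "(b j)\<^sup>2 = (\<Sum>p\<in>B (Suc j). (a p)\<^sup>2)" unfolding b_def by (rule znorm)
    also have "\<dots> \<le> (\<Sum>p\<in>B (Suc j). a p * (X j / real k))"
      by (rule sum_mono) (metis ap a_nn mult_left_mono power2_eq_square)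
    also have "\<dots> = X (Suc j) * X j / real k" unfolding X_def by (simp only: sum_divide_distrib[symmetric] sum_distrib_right[symmetric] times_divide_eq_right)
    finally show ?thesis .
  qed
  have sk: "sqrt (real k) > 0" using kpos by simp
  have bjb: "b j \<le> (5/4 * X (Suc j) + 4/5 * X j) / (2 * sqrt (real k))" for j
  proof -
    have "(b j)\<^sup>2 \<le> X (Suc j) * X j / real k" by (rule blk)
    also have "\<dots> \<le> ((5/4 * X (Suc j) + 4/5 * X j) / (2 * sqrt (real k)))\<^sup>2"
    proof -
      have "4 * (X (Suc j) * X j) \<le> (5/4 * X (Suc j) + 4/5 * X j)\<^sup>2"
        using zero_le_power2[of "5/4 * X (Suc j) - 4/5 * X j"] by (simp add: power2_eq_square algebra_simps)
      thus ?thesis using kpos by (simp add: power_divide power_mult_distrib field_simps)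
    qed
    finally have "(b j)\<^sup>2 \<le> ((5/4 * X (Suc j) + 4/5 * X j) / (2 * sqrt (real k)))\<^sup>2" .
    moreover have "0 \<le> (5/4 * X (Suc j) + 4/5 * X j) / (2 * sqrt (real k))"
      using X_nn[of j] X_nn[of "Suc j"] sk by simp
    ultimately show ?thesis by (rule power2_le_imp_le)
  qed
  define R where "R = (\<Sum>j<N. X (Suc j))"
  have R_nn: "0 \<le> R" unfolding R_def by (simp add: sum_nonneg X_nn)
  have sumX: "(\<Sum>j<N. X j) \<le> X 0 + R"
  proof -
    have "(\<Sum>j<N. X j) \<le> (\<Sum>j<Suc N. X j)" by (simp add: X_nn)
    also have "\<dots> = X 0 + R" unfolding R_def by (simp only: sum.lessThan_Suc_shift)
    finally show ?thesis .
  qed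
  have Mb: "M \<le> (5/4 * R + 4/5 * (X 0 + R)) / (2 * sqrt (real k))"
  proof -
    have "M \<le> (\<Sum>j<N. (5/4 * X (Suc j) + 4/5 * X j) / (2 * sqrt (real k)))"
      unfolding M_def by (rule sum_mono) (rule bjb)
    also have "\<dots> = (5/4 * R + 4/5 * (\<Sum>j<N. X j)) / (2 * sqrt (real k))"
      unfolding R_def by (simp add: sum_divide_distrib[symmetric] sum.distrib sum_distrib_left)
    also have "\<dots> \<le> (5/4 * R + 4/5 * (X 0 + R)) / (2 * sqrt (real k))"
      using sumX sk by (simp add: divide_right_mono)
    finally show ?thesis .
  qed
  have CS: "(X 0)\<^sup>2 \<le> real k * b0\<^sup>2"
    using sum_squared_le_sum_of_squares[of a "B 0"] znorm[of 0] cardB[of 0]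
    unfolding X_def b0_def by (simp add: mult.commute)
  have tot: "(\<Sum>i\<in>UNIV. \<bar>h $ i\<bar>) = X 0 + R"
  proof -
    have "(\<Sum>i\<in>UNIV. \<bar>h $ i\<bar>) = (\<Sum>i\<in>UNIV. if pos i \<in> {..<N} then id \<bar>h $ i\<bar> else 0)"
      using pos_lt by simp
    also have "\<dots> = (\<Sum>p<N. id (a p))" by (rule convB) auto
    also have "\<dots> = (\<Sum>p<Suc N * k. a p)"
    proof -
      have "N \<le> Suc N * k" using kpos by (cases k) auto
      thus ?thesis unfolding id_def by (intro sum.mono_neutral_left) (auto simp: a_def)
    qed
    also have "\<dots> = (\<Sum>j<Suc N. X j)" unfolding X_def B_def by (rule sum.nat_group[symmetric])
    also have "\<dots> = X 0 + R" unfolding R_def by (simp only: sum.lessThan_Suc_shift)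
    finally show ?thesis .
  qed
  have Sb: "(\<Sum>i\<in>S. \<bar>h $ i\<bar>) \<le> X 0"
  proof -
    have "(\<Sum>i\<in>S. \<bar>h $ i\<bar>) = (\<Sum>i\<in>S. a (pos i))" by (simp add: a_pos)
    also have "\<dots> = (\<Sum>p\<in>pos ` S. a p)"
      using sum.reindex[of pos S a] injpos by (simp add: inj_on_def inj_def)
    also have "\<dots> \<le> (\<Sum>p<k. a p)"
    proof (rule topk[OF a_mono a_nn])
      show "card (pos ` S) \<le> k" using card_image_le[of S pos] cS by simp
    qed auto
    also have "\<dots> = X 0" unfolding X_def B_def by (simp add: atLeast0LessThan)
    finally show ?thesis .
  qed
  define Y where "Y = 5/4 * R + 4/5 * (X 0 + R)"
  have Y_nn: "0 \<le> Y" unfolding Y_def using R_nn X_nn[of 0] by simp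
  have M_nn: "0 \<le> M" unfolding M_def b_def by (simp add: sum_nonneg)
  have "2 * sqrt (real k) * M \<le> Y" using Mb sk unfolding Y_def by (simp add: field_simps)
  hence "(2 * sqrt (real k) * M)^2 \<le> Y^2" using M_nn sk by (intro power_mono) auto
  hence YM: "4 * real k * M^2 \<le> Y^2" by (simp add: power_mult_distrib)
  have "(1 - \<delta>) * (X 0)\<^sup>2 \<le> (1 - \<delta>) * (real k * b0\<^sup>2)"
    using CS d1 by (intro mult_left_mono) auto
  also have "\<dots> = real k * ((1 - \<delta>) * b0\<^sup>2)" by simp
  also have "\<dots> \<le> real k * (\<delta> * M^2 / 2)" using key1 by (intro mult_left_mono) auto
  also have "\<dots> = \<delta> * (4 * real k * M^2) / 8" by simp
  also have "\<dots> \<le> \<delta> * Y^2 / 8" using YM d0 by (intro divide_right_mono mult_left_mono) auto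
  also have "\<dots> \<le> (1 - \<delta>) * (0.1024 * Y^2)"
  proof -
    have "\<delta> / 8 \<le> (1 - \<delta>) * 0.1024" using d1 by simp
    hence "\<delta> / 8 * Y^2 \<le> ((1 - \<delta>) * 0.1024) * Y^2" by (rule mult_right_mono) simp
    thus ?thesis by (simp add: algebra_simps)
  qed
  finally have "(X 0)\<^sup>2 \<le> (0.32 * Y)\<^sup>2" using d1 by (simp add: power_mult_distrib power_divide)
  moreover have "0 \<le> 0.32 * Y" using Y_nn by simp
  ultimately have "X 0 \<le> 0.32 * Y" by (rule power2_le_imp_le)
  hence "11 * X 0 \<le> 10 * R" unfolding Y_def using R_nn by (simp add: field_simps)
  moreover note fin_lin
  ultimately show ?thesis using tot Sb by blast
qed


lemma obj_sum:
  fixes x :: "real ^ 'n"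
  shows "P2_obj \<alpha> x = (\<Sum>i\<in>UNIV. \<bar>x $ i\<bar> + (x $ i)\<^sup>2 / (2 * \<alpha>))"
  unfolding P2_obj_def l1norm_def power2_norm_eq_inner inner_vec_def
  by (simp add: sum.distrib sum_divide_distrib power2_eq_square)

lemma coord:
  fixes y y0 \<alpha> :: real
  assumes a: "\<alpha> > 0" and y0: "10 * \<bar>y0\<bar> \<le> \<alpha>"
  shows "(if y0 \<noteq> 0 then - (11/10) * \<bar>y - y0\<bar> else \<bar>y - y0\<bar>) + (y - y0)\<^sup>2 / (2 * \<alpha>)
     \<le> (\<bar>y\<bar> + y\<^sup>2 / (2 * \<alpha>)) - (\<bar>y0\<bar> + y0\<^sup>2 / (2 * \<alpha>))"
proof -
  define d where "d = y - y0"
  have e: "(\<bar>y\<bar> + y\<^sup>2 / (2 * \<alpha>)) - (\<bar>y0\<bar> + y0\<^sup>2 / (2 * \<alpha>)) = \<bar>y\<bar> - \<bar>y0\<bar> + y0 * d / \<alpha> + d\<^sup>2 / (2 * \<alpha>)"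
    using a unfolding d_def by (simp add: field_simps power2_eq_square)
  have "(if y0 \<noteq> 0 then - (11/10) * \<bar>d\<bar> else \<bar>d\<bar>) \<le> \<bar>y\<bar> - \<bar>y0\<bar> + y0 * d / \<alpha>"
  proof (cases "y0 = 0")
    case True thus ?thesis unfolding d_def by simp
  next
    case False
    have t1: "- \<bar>d\<bar> \<le> \<bar>y\<bar> - \<bar>y0\<bar>" unfolding d_def by simp
    have "\<bar>y0\<bar> \<le> \<alpha>/10" using y0 by simp
    hence "\<bar>y0\<bar> * \<bar>d\<bar> \<le> (\<alpha>/10) * \<bar>d\<bar>" by (rule mult_right_mono) simp
    hence "\<bar>y0 * d\<bar> \<le> (\<alpha>/10) * \<bar>d\<bar>" by (simp add: abs_mult)
    hence "\<bar>y0 * d / \<alpha>\<bar> \<le> \<bar>d\<bar> / 10" using a by (simp add: field_simps)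
    hence "- (\<bar>d\<bar> / 10) \<le> y0 * d / \<alpha>" by linarith
    thus ?thesis using False t1 by simp
  qed
  thus ?thesis using e unfolding d_def by simp
qed

theorem mainTheorem2:
  fixes A :: "real ^ 'n ^ 'm" and x0 :: "real ^ 'n" and k :: nat and \<alpha> :: real
  assumes "sparse k x0"
    and "rip_const A (2 * k) \<le> 0.4404"
    and "\<alpha> > 0"
    and "\<alpha> \<ge> 10 * linfnorm x0"
  shows "P2_unique_minimizer A (A *v x0) \<alpha> x0"
  unfolding P2_unique_minimizer_def
proof (intro conjI refl allI impI, elim conjE)
  fix x assume Ax: "A *v x = A *v x0" and ne: "x \<noteq> x0"
  define \<delta> where "\<delta> = rip_const A (2 * k)"
  have rip: "0 \<le> \<delta> \<and> (\<forall>x. sparse (2*k) x \<longrightarrow> (1 - \<delta>) * (norm x)\<^sup>2 \<le> (norm (A *v x))\<^sup>2 \<and> (norm (A *v x))\<^sup>2 \<le> (1 + \<delta>) * (norm x)\<^sup>2)"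
    unfolding \<delta>_def by (rule rip_attained)
  define h where "h = x - x0"
  have Ah: "A *v h = 0" unfolding h_def using Ax by (simp add: matrix_vector_mult_diff_distrib)
  define S where "S = {i. x0 $ i \<noteq> 0}"
  have cS: "card S \<le> k" using assms(1) unfolding sparse_def S_def .
  have N: "11 * (\<Sum>i\<in>S. \<bar>h $ i\<bar>) \<le> 10 * ((\<Sum>i\<in>UNIV. \<bar>h $ i\<bar>) - (\<Sum>i\<in>S. \<bar>h $ i\<bar>))"
    by (rule nsp[of k \<delta> A]) (use rip assms(2) Ah cS in \<open>auto simp: \<delta>_def\<close>)
  have lin: "10 * \<bar>x0 $ i\<bar> \<le> \<alpha>" for i
  proof -
    have "\<bar>x0 $ i\<bar> \<le> linfnorm x0" unfolding linfnorm_def by (rule Max_ge) auto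
    thus ?thesis using assms(4) by simp
  qed
  have hc: "\<And>i. h $ i = x $ i - x0 $ i" unfolding h_def by simp
  have "(\<Sum>i\<in>UNIV. (if i \<in> S then - (11/10) * \<bar>h $ i\<bar> else \<bar>h $ i\<bar>) + (h $ i)\<^sup>2 / (2 * \<alpha>))
     \<le> (\<Sum>i\<in>UNIV. (\<bar>x $ i\<bar> + (x $ i)\<^sup>2 / (2 * \<alpha>)) - (\<bar>x0 $ i\<bar> + (x0 $ i)\<^sup>2 / (2 * \<alpha>)))"
    by (rule sum_mono) (unfold hc S_def mem_Collect_eq, rule coord[OF assms(3) lin])
  also have "\<dots> = P2_obj \<alpha> x - P2_obj \<alpha> x0" by (simp add: obj_sum sum_subtractf)
  finally have F: "(\<Sum>i\<in>UNIV. (if i \<in> S then - (11/10) * \<bar>h $ i\<bar> else \<bar>h $ i\<bar>)) + (\<Sum>i\<in>UNIV. (h $ i)\<^sup>2) / (2 * \<alpha>)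
      \<le> P2_obj \<alpha> x - P2_obj \<alpha> x0"
    by (simp add: sum.distrib sum_divide_distrib)
  have "(\<Sum>i\<in>UNIV. (if i \<in> S then - (11/10) * \<bar>h $ i\<bar> else \<bar>h $ i\<bar>))
      = (\<Sum>i\<in>UNIV. \<bar>h $ i\<bar> - (if i \<in> S then (21/10) * \<bar>h $ i\<bar> else 0))"
    by (rule sum.cong) auto
  also have "\<dots> = (\<Sum>i\<in>UNIV. \<bar>h $ i\<bar>) - (21/10) * (\<Sum>i\<in>S. \<bar>h $ i\<bar>)"
    by (simp add: sum_subtractf sum.inter_restrict[symmetric] sum_distrib_left)
  finally have G: "0 \<le> (\<Sum>i\<in>UNIV. (if i \<in> S then - (11/10) * \<bar>h $ i\<bar> else \<bar>h $ i\<bar>))"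
    using N by simp
  have "h \<noteq> 0" using ne unfolding h_def by simp
  hence "0 < (norm h)\<^sup>2" by simp
  hence "0 < (\<Sum>i\<in>UNIV. (h $ i)\<^sup>2)" unfolding power2_norm_eq_inner inner_vec_def by (simp add: power2_eq_square)
  hence "0 < (\<Sum>i\<in>UNIV. (h $ i)\<^sup>2) / (2 * \<alpha>)" using assms(3) by simp
  thus "P2_obj \<alpha> x0 < P2_obj \<alpha> x" using F G by linarith
qed

end
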